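(* Let $g\ge2$, $\sigma\in\mathrm{Spin}(\Sigma_g)$ and $B$ a symplectic basis of $H_1(\Sigma_g;\mathbb{Z}/2)$. The $\mathbb{Z}/8$-submodule of $\mathrm{Map}(H_1(\Sigma_g;\mathbb{Z}/2),\mathbb{Z}/8)$ spanned by the functions $\overline{C}$, $C\in H_1(\Sigma_g;\mathbb{Z}/2)$ (which is the image of Sato's homomorphism $\beta_\sigma$) equals the internal direct sum $$\bigoplus_{X\in B}\mathbb{Z}/8\cdot\overline{X}\ \oplus\bigoplus_{\{X,Y\}\subset B}\mathbb{Z}/8\cdot 2\overline{X}\,\overline{Y}\ \oplus\bigoplus_{\{X,Y,Z\}\subset B}\mathbb{Z}/8\cdot4\overline{X}\,\overline{Y}\,\overline{Z}\ \cong(\mathbb{Z}/8)^{2g}\oplus(\mathbb{Z}/4)^{\binom{2g}{2}}\oplus(\mathbb{Z}/2)^{\binom{2g}{3}},$$ the sums running over subsets of distinct elements of $B$.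
   Context: $\Sigma_g$ is a closed oriented genus $g$ surface. To $\sigma\in\mathrm{Spin}(\Sigma_g)$ is associated (Johnson) a quadratic form $q_\sigma:H_1(\Sigma_g;\mathbb{Z}/2)\to\mathbb{Z}/2$, $q_\sigma(y+z)=q_\sigma(y)+q_\sigma(z)+y\cdot z$. For $z\in H_1(\Sigma_g;\mathbb{Z}/2)$, $i_z(y)=1\in\mathbb{Z}/8$ if $z\cdot y\equiv1\pmod2$ and $0$ otherwise. $\overline{C}:=(-1)^{q_\sigma(C)}i_C\in\mathrm{Map}(H_1(\Sigma_g;\mathbb{Z}/2),\mathbb{Z}/8)$, a $\mathbb{Z}/8$-algebra under pointwise operations. Sato's homomorphism $\beta_\sigma:\mathrm{Mod}_{g,1}[2]\to\mathrm{Map}(H_1(\Sigma_g;\mathbb{Z}/2),\mathbb{Z}/8)$ satisfies $\beta_\sigma(t_c^2)=\overline{[c]}$ for non-separating simple closed curves $c$, and $\mathrm{Mod}_{g,1}[2]$ (the level 2 subgroup of the mapping class group of $\Sigma_g$ rel a disc) is generated by such squares. A symplectic basis satisfies $A_i\cdot B_j=\delta_{ij}$, $A_i\cdot A_j=B_i\cdot B_j=0$. *)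

theory Defs
  imports Main "HOL-Library.Z2" "HOL-Library.Numeral_Type"
    "HOL-Library.Function_Algebras" "HOL-Library.Product_Plus"
begin

text \<open>Model of H_1(Sigma_g; Z/2): pairs of coordinate vectors indexed by a finite
  type 'g with CARD('g) = g (a-coordinates and b-coordinates of the standard basis).\<close>
type_synonym 'g hom1 = "('g \<Rightarrow> bit) \<times> ('g \<Rightarrow> bit)"

definition ipair :: "'g::finite hom1 \<Rightarrow> 'g hom1 \<Rightarrow> bit" where
  "ipair x y = (\<Sum>i\<in>UNIV. fst x i * snd y i + snd x i * fst y i)"

text \<open>Quadratic forms of Johnson (these are exactly the spin structures).\<close>
definition quad_form :: "('g::finite hom1 \<Rightarrow> bit) \<Rightarrow> bool" where
  "quad_form q \<longleftrightarrow> (\<forall>y z. q (y + z) = q y + q z + ipair y z)"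

definition symplectic_basis :: "('g::finite \<Rightarrow> 'g hom1) \<Rightarrow> ('g \<Rightarrow> 'g hom1) \<Rightarrow> bool" where
  "symplectic_basis A B \<longleftrightarrow>
     (\<forall>i j. ipair (A i) (B j) = (if i = j then 1 else 0)
          \<and> ipair (A i) (A j) = 0 \<and> ipair (B i) (B j) = 0)"

definition ind :: "'g::finite hom1 \<Rightarrow> 'g hom1 \<Rightarrow> 8" where
  "ind z y = (if ipair z y = 1 then 1 else 0)"

definition cbar :: "('g::finite hom1 \<Rightarrow> bit) \<Rightarrow> 'g hom1 \<Rightarrow> ('g hom1 \<Rightarrow> 8)" where
  "cbar q C = (\<lambda>y. (if q C = 1 then -1 else 1) * ind C y)"

definition cbar_span :: "('g::finite hom1 \<Rightarrow> bit) \<Rightarrow> ('g hom1 \<Rightarrow> 8) set" where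
  "cbar_span q = {f. \<exists>c :: 'g hom1 \<Rightarrow> 8. f = (\<lambda>y. \<Sum>C\<in>UNIV. c C * cbar q C y)}"

definition basis_set :: "('g::finite \<Rightarrow> 'g hom1) \<Rightarrow> ('g \<Rightarrow> 'g hom1) \<Rightarrow> 'g hom1 set" where
  "basis_set A B = range A \<union> range B"

definition summand_index :: "('g::finite \<Rightarrow> 'g hom1) \<Rightarrow> ('g \<Rightarrow> 'g hom1) \<Rightarrow> 'g hom1 set set" where
  "summand_index A B = {S. S \<subseteq> basis_set A B \<and> 1 \<le> card S \<and> card S \<le> 3}"

text \<open>Generator for S: X-bar, 2 X-bar Y-bar, 4 X-bar Y-bar Z-bar.\<close>
definition gen :: "('g::finite hom1 \<Rightarrow> bit) \<Rightarrow> 'g hom1 set \<Rightarrow> ('g hom1 \<Rightarrow> 8)" where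
  "gen q S = (\<lambda>y. 2 ^ (card S - 1) * (\<Prod>X\<in>S. cbar q X y))"

end

theory Submission
  imports Defs "HOL-Library.Cardinality"
begin
declare add_bit_eq_xor[simp del] mult_bit_eq_and[simp del] bit_not_zero_iff[simp del] bit_not_one_iff[simp del]

lemma U8: "(UNIV::8 set) = {0,1,2,3,4,5,6,7}"
proof -
  { fix a :: 8
    obtain z where z: "a = of_int z" "0 \<le> z" "z < 8" by (cases a) auto
    then have "z = 0 \<or> z = 1 \<or> z = 2 \<or> z = 3 \<or> z = 4 \<or> z = 5 \<or> z = 6 \<or> z = 7" by auto
    then have "a \<in> {0,1,2,3,4,5,6,7}" using z(1) by auto }
  then show ?thesis by auto
qed

lemma r2: "range (\<lambda>a::8. a * 2) = {0,2,4,6}"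
proof
  show "range (\<lambda>a::8. a * 2) \<subseteq> {0,2,4,6}"
  proof
    fix x assume "x \<in> range (\<lambda>a::8. a * 2)"
    then obtain a where x: "x = a * 2" by blast
    have "a \<in> {0,1,2,3,4,5,6,7}" using U8 by blast
    then show "x \<in> {0,2,4,6}" using x by auto
  qed
  show "{0,2,4,6} \<subseteq> range (\<lambda>a::8. a * 2)"
    by (auto simp: image_iff intro: exI[of _ 0] exI[of _ 1] exI[of _ 2] exI[of _ 3])
qed

lemma r4: "range (\<lambda>a::8. a * 4) = {0,4}"
proof
  show "range (\<lambda>a::8. a * 4) \<subseteq> {0,4}"
  proof
    fix x assume "x \<in> range (\<lambda>a::8. a * 4)"
    then obtain a where x: "x = a * 4" by blast
    have "a \<in> {0,1,2,3,4,5,6,7}" using U8 by blast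
    then show "x \<in> {0,4}" using x by auto
  qed
  show "{0,4} \<subseteq> range (\<lambda>a::8. a * 4)"
    by (auto simp: image_iff intro: exI[of _ 0] exI[of _ 1])
qed

lemma eight: "(8::8) = 0" by simp

lemma UNIV_bit: "(UNIV::bit set) = {0,1}"
  by (auto intro: bit.exhaust)
lemma card_bit: "CARD(bit) = 2" by (simp add: UNIV_bit)

lemma card_H: "CARD('g::finite hom1) = 2 ^ CARD('g) * 2 ^ CARD('g)"
  by (simp add: card_prod card_fun card_bit)
lemma finite_H: "finite (UNIV :: 'g::finite hom1 set)"
  by (rule card_ge_0_finite) (simp only: card_H, simp)

lemma ipair_add1: "ipair (x+y) z = ipair x z + ipair y z"
  by (simp add: ipair_def sum.distrib distrib_right add_ac)
lemma ipair_sym: "ipair x y = ipair y x"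
  by (simp add: ipair_def mult.commute add.commute)
lemma ipair_add2: "ipair z (x+y) = ipair z x + ipair z y"
  using ipair_add1 ipair_sym by metis
lemma ipair_zero1: "ipair 0 z = 0"
  by (simp add: ipair_def)
lemma ipair_sum1: "finite T \<Longrightarrow> ipair (\<Sum>X\<in>T. f X) z = (\<Sum>X\<in>T. ipair (f X) z)"
  by (induct T rule: finite_induct) (simp_all add: ipair_zero1 ipair_add1)
lemma ipair_sum2: "finite T \<Longrightarrow> ipair z (\<Sum>X\<in>T. f X) = (\<Sum>X\<in>T. ipair z (f X))"
  using ipair_sum1[of T f z] by (simp add: ipair_sym)

lemma ind_add: "ind (X+Y) y = ind X y + ind Y y - 2 * ind X y * ind Y y"
  unfolding ind_def ipair_add1
  by (cases "ipair X y"; cases "ipair Y y") simp_all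
lemma ind_zero: "ind 0 y = 0"
  by (simp add: ind_def ipair_zero1)
lemma ind_idem: "ind X y * ind X y = ind X y"
  by (simp add: ind_def)

definition Lin :: "'j set \<Rightarrow> ('j \<Rightarrow> 'x \<Rightarrow> 'r::comm_ring_1) \<Rightarrow> ('x \<Rightarrow> 'r) set" where
  "Lin J h = {f. \<exists>c. f = (\<lambda>y. \<Sum>j\<in>J. c j * h j y)}"

lemma Lin_zero: "(\<lambda>y. 0) \<in> Lin J h"
  unfolding Lin_def by (rule CollectI, rule exI[of _ "\<lambda>_. 0"]) simp

lemma Lin_add: "f \<in> Lin J h \<Longrightarrow> g \<in> Lin J h \<Longrightarrow> (\<lambda>y. f y + g y) \<in> Lin J h"
  unfolding Lin_def
  apply clarify
  subgoal for c d by (rule exI[of _ "\<lambda>j. c j + d j"]) (simp add: sum.distrib distrib_right)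
  done

lemma Lin_scale: "f \<in> Lin J h \<Longrightarrow> (\<lambda>y. a * f y) \<in> Lin J h"
  unfolding Lin_def
  apply clarify
  subgoal for c by (rule exI[of _ "\<lambda>j. a * c j"]) (simp add: sum_distrib_left mult.assoc)
  done

lemma Lin_base: "finite J \<Longrightarrow> j \<in> J \<Longrightarrow> h j \<in> Lin J h"
proof -
  assume fJ: "finite J" and j: "j \<in> J"
  have "h j = (\<lambda>y. \<Sum>i\<in>J. (if i = j then 1 else 0) * h i y)"
  proof (rule ext)
    fix y
    have "(\<Sum>i\<in>J. (if i = j then 1 else 0) * h i y) = (\<Sum>i\<in>J. if i = j then h j y else 0)"
      by (rule sum.cong) auto
    also have "\<dots> = h j y" using fJ j by simp
    finally show "h j y = (\<Sum>i\<in>J. (if i = j then 1 else 0) * h i y)" by simp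
  qed
  then show ?thesis unfolding Lin_def
    by (intro CollectI exI[of _ "\<lambda>i. if i = j then 1 else 0"])
qed


lemma Lin_sum: "finite K \<Longrightarrow> (\<forall>k\<in>K. g k \<in> Lin J h) \<Longrightarrow> (\<lambda>y. \<Sum>k\<in>K. c k * g k y) \<in> Lin J h"
proof (induct K rule: finite_induct)
  case empty then show ?case using Lin_zero by simp
next
  case (insert k K)
  have "(\<lambda>y. c k * g k y + (\<Sum>k\<in>K. c k * g k y)) \<in> Lin J h"
    using insert by (intro Lin_add Lin_scale) auto
  then show ?case using insert by simp
qed

lemma Lin_diff: "f \<in> Lin J h \<Longrightarrow> g \<in> Lin J h \<Longrightarrow> (\<lambda>y. f y - g y) \<in> Lin J h"
  using Lin_add[of f J h "\<lambda>y. (-1) * g y"] Lin_scale[of g J h "-1"] by simp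

lemma Lin_subset:
  assumes "finite J'" "\<forall>j\<in>J'. h' j \<in> Lin J h"
  shows "Lin J' h' \<subseteq> Lin J h"
proof
  fix f assume "f \<in> Lin J' h'"
  then obtain c where "f = (\<lambda>y. \<Sum>j\<in>J'. c j * h' j y)" unfolding Lin_def by blast
  then show "f \<in> Lin J h" using Lin_sum[OF assms, of c] by simp
qed

definition dualv :: "('g::finite \<Rightarrow> 'g hom1) \<Rightarrow> ('g \<Rightarrow> 'g hom1) \<Rightarrow> 'g hom1 \<Rightarrow> 'g hom1" where
  "dualv A B X = (if X \<in> range A then B (inv A X) else A (inv B X))"

context
  fixes A B :: "'g::finite \<Rightarrow> 'g hom1"
  assumes sb: "symplectic_basis A B"
begin

lemma sbAB: "ipair (A i) (B j) = (if i = j then 1 else 0)"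
  and sbAA: "ipair (A i) (A j) = 0" and sbBB: "ipair (B i) (B j) = 0"
  using sb unfolding symplectic_basis_def by auto

lemma A_inj: "inj A"
proof (rule injI)
  fix i j assume "A i = A j"
  then have "ipair (A i) (B i) = ipair (A j) (B i)" by simp
  then show "i = j" by (simp add: sbAB split: if_splits)
qed

lemma sbAB_same: "ipair (A i) (B i) = 1" by (simp add: sbAB)
lemma sbAB_diff: "i \<noteq> j \<Longrightarrow> ipair (A i) (B j) = 0" by (simp add: sbAB)

lemma B_inj: "inj B"
proof (rule injI)
  fix i j assume e: "B i = B j"
  show "i = j"
  proof (rule ccontr)
    assume "i \<noteq> j"
    then have "ipair (A i) (B j) = 0" by (rule sbAB_diff)
    moreover have "ipair (A i) (B i) = 1" by (rule sbAB_same)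
    ultimately show False using e by (metis zero_neq_one)
  qed
qed

lemma AB_dist: "A i \<noteq> B j"
proof
  assume e: "A i = B j"
  have "ipair (A i) (B i) = 1" by (rule sbAB_same)
  moreover have "ipair (B j) (B i) = 0" by (rule sbBB)
  ultimately show False using e by (metis zero_neq_one)
qed

lemma dual_A: "dualv A B (A k) = B k"
  unfolding dualv_def using A_inj by simp

lemma dual_B: "dualv A B (B k) = A k"
proof -
  have "B k \<notin> range A" using AB_dist by (metis rangeE)
  then show ?thesis unfolding dualv_def using B_inj by simp
qed

lemma BA_dist: "B j \<noteq> A i"
  using AB_dist by metis

lemma dual_prop:
  assumes "X \<in> basis_set A B" "Z \<in> basis_set A B"
  shows "ipair Z (dualv A B X) = (if Z = X then 1 else 0)"
proof -
  from assms(1) consider (a) k where "X = A k" | (b) k where "X = B k"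
    unfolding basis_set_def by blast
  then show ?thesis
  proof cases
    case a
    from assms(2) consider (a') i where "Z = A i" | (b') i where "Z = B i"
      unfolding basis_set_def by blast
    then show ?thesis
    proof cases
      case a' then show ?thesis using a by (simp add: dual_A sbAB inj_eq[OF A_inj])
    next
      case b' then show ?thesis using a by (simp add: dual_A sbBB BA_dist)
    qed
  next
    case b
    from assms(2) consider (a') i where "Z = A i" | (b') i where "Z = B i"
      unfolding basis_set_def by blast
    then show ?thesis
    proof cases
      case a' then show ?thesis using b by (simp add: dual_B sbAA AB_dist)
    next
      case b' then show ?thesis using b
        by (simp add: dual_B ipair_sym[of "B i"] sbAB inj_eq[OF B_inj] eq_commute)
    qed
  qed
qed

lemma finite_E: "finite (basis_set A B)"
  unfolding basis_set_def by simp

lemma card_E: "card (basis_set A B) = 2 * CARD('g)"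
proof -
  have "range A \<inter> range B = {}" using AB_dist BA_dist by blast
  then have "card (basis_set A B) = card (range A) + card (range B)"
    unfolding basis_set_def by (simp add: card_Un_disjoint)
  also have "\<dots> = CARD('g) + CARD('g)"
    using A_inj B_inj by (simp add: card_image)
  finally show ?thesis by simp
qed

definition pt :: "'g hom1 set \<Rightarrow> 'g hom1" where
  "pt W = (\<Sum>X\<in>W. dualv A B X)"

lemma pt_prop:
  assumes "W \<subseteq> basis_set A B" "Z \<in> basis_set A B"
  shows "ipair Z (pt W) = (if Z \<in> W then 1 else 0)"
proof -
  have fW: "finite W" using assms(1) finite_E finite_subset by blast
  have "ipair Z (pt W) = (\<Sum>X\<in>W. ipair Z (dualv A B X))"
    unfolding pt_def using fW by (rule ipair_sum2)
  also have "\<dots> = (\<Sum>X\<in>W. if Z = X then 1 else 0)"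
    using assms by (intro sum.cong) (auto simp: dual_prop)
  also have "\<dots> = (if Z \<in> W then 1 else 0)" using fW by simp
  finally show ?thesis .
qed

lemma ind_pt:
  assumes "W \<subseteq> basis_set A B" "Z \<in> basis_set A B"
  shows "ind Z (pt W) = (if Z \<in> W then 1 else 0)"
proof (cases "Z \<in> W")
  case True
  have a: "ipair Z (pt W) = 1" using trans[OF pt_prop[OF assms] if_P[OF True]] .
  show ?thesis unfolding ind_def
    by (rule trans[OF if_P[OF a] sym[OF if_P[OF True]]])
next
  case False
  have a: "ipair Z (pt W) = 0" using trans[OF pt_prop[OF assms] if_not_P[OF False]] .
  have b: "ipair Z (pt W) \<noteq> 1" using a by (metis zero_neq_one)
  show ?thesis unfolding ind_def
    by (rule trans[OF if_not_P[OF b] sym[OF if_not_P[OF False]]])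
qed

lemma spanning:
  "\<exists>T \<subseteq> basis_set A B. C = (\<Sum>X\<in>T. X)"
proof -
  let ?E = "basis_set A B"
  let ?phi = "\<lambda>T. (\<Sum>X\<in>T. X) :: 'g hom1"
  have inj: "inj_on ?phi (Pow ?E)"
  proof (rule inj_onI)
    fix T T' assume T: "T \<in> Pow ?E" and T': "T' \<in> Pow ?E" and eq: "?phi T = ?phi T'"
    have key: "ipair (?phi U) (dualv A B X0) = (if X0 \<in> U then 1 else 0)"
      if "U \<subseteq> ?E" "X0 \<in> ?E" for U X0
    proof -
      have fU: "finite U" using that(1) finite_E finite_subset by blast
      have "ipair (?phi U) (dualv A B X0) = (\<Sum>X\<in>U. ipair X (dualv A B X0))"
        using fU by (rule ipair_sum1)
      also have "\<dots> = (\<Sum>X\<in>U. if X = X0 then 1 else 0)"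
        using that by (intro sum.cong) (auto simp: dual_prop)
      also have "\<dots> = (if X0 \<in> U then 1 else 0)" using fU by simp
      finally show ?thesis .
    qed
    show "T = T'"
    proof (rule set_eqI)
      fix X0
      show "X0 \<in> T \<longleftrightarrow> X0 \<in> T'"
      proof (cases "X0 \<in> ?E")
        case True
        have TE: "T \<subseteq> ?E" "T' \<subseteq> ?E" using T T' by auto
        have "(if X0 \<in> T then (1::bit) else 0) = ipair (?phi T) (dualv A B X0)"
          using key[OF TE(1) True] by (rule sym)
        also have "\<dots> = ipair (?phi T') (dualv A B X0)" by (simp only: eq)
        also have "\<dots> = (if X0 \<in> T' then 1 else 0)" by (rule key[OF TE(2) True])
        finally have ee: "(if X0 \<in> T then (1::bit) else 0) = (if X0 \<in> T' then 1 else 0)" .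
        show ?thesis
        proof (cases "X0 \<in> T"; cases "X0 \<in> T'")
          assume "X0 \<in> T" "X0 \<notin> T'"
          then have "(1::bit) = 0" using ee by (simp only: if_P if_not_P if_True if_False)
          then show ?thesis by (simp only: one_neq_zero)
        next
          assume "X0 \<notin> T" "X0 \<in> T'"
          then have "(0::bit) = 1" using ee by (simp only: if_P if_not_P if_True if_False)
          then show ?thesis by (simp only: zero_neq_one)
        qed blast+
      next
        case False then show ?thesis using T T' by blast
      qed
    qed
  qed
  have "card (?phi ` Pow ?E) = card (Pow ?E)" using inj by (rule card_image)
  also have "\<dots> = 2 ^ (2 * CARD('g))" using finite_E card_E by (simp add: card_Pow)
  also have "\<dots> = 2 ^ CARD('g) * 2 ^ CARD('g)" by (metis mult_2 power_add)
  also have "\<dots> = CARD('g hom1)" by (rule card_H[symmetric])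
  finally have "?phi ` Pow ?E = UNIV"
    using finite_H by (intro card_subset_eq) auto
  then obtain T where "T \<in> Pow ?E" "C = ?phi T" by (metis UNIV_I imageE)
  then show ?thesis by auto
qed


definition sg :: "('g hom1 \<Rightarrow> bit) \<Rightarrow> 'g hom1 \<Rightarrow> 8" where
  "sg q X = (if q X = 1 then -1 else 1)"
definition sig :: "('g hom1 \<Rightarrow> bit) \<Rightarrow> 'g hom1 set \<Rightarrow> 8" where
  "sig q S = (\<Prod>X\<in>S. sg q X)"
definition mon :: "'g hom1 set \<Rightarrow> 'g hom1 \<Rightarrow> 8" where
  "mon S y = (\<Prod>X\<in>S. ind X y)"

lemma sg_sq: "sg q X * sg q X = 1" by (simp add: sg_def)
lemma sig_sq: "sig q S * sig q S = 1"
  unfolding sig_def prod.distrib[symmetric] by (simp add: sg_sq)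
lemma cbar_eq: "cbar q X y = sg q X * ind X y" by (simp add: cbar_def sg_def)
lemma gen_eq: "gen q S y = 2 ^ (card S - 1) * sig q S * mon S y"
  by (simp add: gen_def sig_def mon_def cbar_eq prod.distrib mult.assoc)

lemma finite_I: "finite (summand_index A B)"
proof -
  have "summand_index A B \<subseteq> Pow (basis_set A B)" unfolding summand_index_def by auto
  then show ?thesis using finite_E by (meson finite_Pow_iff finite_subset)
qed

lemma I_finite_mem: "S \<in> summand_index A B \<Longrightarrow> finite S"
  unfolding summand_index_def using card_gt_0_iff by fastforce

lemma ind_in_M: "a \<in> basis_set A B \<Longrightarrow> (\<lambda>y. ind a y) \<in> Lin (summand_index A B) (gen q)"
proof -
  assume a: "a \<in> basis_set A B"
  have I: "{a} \<in> summand_index A B" using a unfolding summand_index_def by auto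
  have "(\<lambda>y. sg q a * gen q {a} y) \<in> Lin (summand_index A B) (gen q)"
    by (rule Lin_scale, rule Lin_base[OF finite_I I])
  moreover have "(\<lambda>y. sg q a * gen q {a} y) = (\<lambda>y. ind a y)"
    by (simp add: gen_eq sig_def mon_def mult.assoc[symmetric] sg_sq)
  ultimately show ?thesis by simp
qed

lemma mult_gen:
  assumes a: "a \<in> basis_set A B" and S: "S \<in> summand_index A B"
  shows "(\<lambda>y. 2 * ind a y * gen q S y) \<in> Lin (summand_index A B) (gen q)"
proof -
  let ?M = "Lin (summand_index A B) (gen q)"
  have fS: "finite S" using S by (rule I_finite_mem)
  have cS: "1 \<le> card S" "card S \<le> 3" "S \<subseteq> basis_set A B" using S unfolding summand_index_def by auto
  show ?thesis
  proof (cases "a \<in> S")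
    case True
    have "\<And>y. mon S y = ind a y * mon (S - {a}) y"
      unfolding mon_def using fS True by (simp add: prod.remove)
    then have idm: "\<And>y. ind a y * mon S y = mon S y"
      by (metis ind_idem mult.assoc)
    have "2 * ind a y * gen q S y = 2 * gen q S y" for y
    proof -
      have "2 * ind a y * gen q S y = (2 * (2 ^ (card S - 1) * sig q S)) * (ind a y * mon S y)"
        unfolding gen_eq by (simp only: mult_ac)
      also have "\<dots> = (2 * (2 ^ (card S - 1) * sig q S)) * mon S y" by (simp only: idm)
      also have "\<dots> = 2 * gen q S y" unfolding gen_eq by (simp only: mult_ac)
      finally show ?thesis .
    qed
    then have "(\<lambda>y. 2 * ind a y * gen q S y) = (\<lambda>y. 2 * gen q S y)" by (rule ext)
    moreover have "(\<lambda>y. 2 * gen q S y) \<in> ?M" by (rule Lin_scale, rule Lin_base[OF finite_I S])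
    ultimately show ?thesis by simp
  next
    case False
    show ?thesis
    proof (cases "card S = 3")
      case True
      have "(\<lambda>y. 2 * ind a y * gen q S y) = (\<lambda>y. 0)"
        by (simp add: gen_eq True eight)
      then show ?thesis using Lin_zero by simp
    next
      case c3: False
      let ?S' = "insert a S"
      have cS': "card ?S' = Suc (card S)" using fS False by simp
      have S': "?S' \<in> summand_index A B" using cS a c3 cS' unfolding summand_index_def by auto
      have e: "2 * 2 ^ (card S - 1) = (2::8) ^ card S"
        using cS(1) by (metis Suc_diff_1 less_eq_Suc_le power_Suc One_nat_def)
      have "\<And>y. 2 * ind a y * gen q S y = sg q a * gen q ?S' y"
      proof -
        fix y
        have "gen q ?S' y = 2 ^ card S * (sg q a * sig q S) * (ind a y * mon S y)"
          using fS False by (simp add: gen_eq sig_def mon_def)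
        then have "sg q a * gen q ?S' y = 2 ^ card S * ((sg q a * sg q a) * sig q S) * (ind a y * mon S y)"
          by (simp add: algebra_simps)
        also have "\<dots> = 2 * 2 ^ (card S - 1) * sig q S * (ind a y * mon S y)"
          by (simp only: sg_sq e mult_1_left)
        also have "\<dots> = 2 * ind a y * gen q S y" by (simp add: gen_eq algebra_simps)
        finally show "2 * ind a y * gen q S y = sg q a * gen q ?S' y" by simp
      qed
      moreover have "(\<lambda>y. sg q a * gen q ?S' y) \<in> ?M"
        by (rule Lin_scale, rule Lin_base[OF finite_I S'])
      ultimately show ?thesis by simp
    qed
  qed
qed

lemma mult_M:
  assumes a: "a \<in> basis_set A B" and f: "f \<in> Lin (summand_index A B) (gen q)"
  shows "(\<lambda>y. 2 * ind a y * f y) \<in> Lin (summand_index A B) (gen q)"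
proof -
  obtain c where c: "f = (\<lambda>y. \<Sum>S\<in>summand_index A B. c S * gen q S y)"
    using f unfolding Lin_def by auto
  have "(\<lambda>y. \<Sum>S\<in>summand_index A B. c S * (\<lambda>y. 2 * ind a y * gen q S y) y)
          \<in> Lin (summand_index A B) (gen q)"
    using mult_gen[OF a] finite_I by (intro Lin_sum) auto
  moreover have "(\<lambda>y. 2 * ind a y * f y) = (\<lambda>y. \<Sum>S\<in>summand_index A B. c S * (\<lambda>y. 2 * ind a y * gen q S y) y)"
    unfolding c by (simp add: sum_distrib_left algebra_simps)
  ultimately show ?thesis by simp
qed

lemma indsum_M:
  "T \<subseteq> basis_set A B \<Longrightarrow> (\<lambda>y. ind (\<Sum>X\<in>T. X) y) \<in> Lin (summand_index A B) (gen q)"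
proof -
  assume T: "T \<subseteq> basis_set A B"
  have fT: "finite T" using T finite_E finite_subset by blast
  from fT T show ?thesis
  proof (induct T rule: finite_induct)
    case empty then show ?case using Lin_zero by (simp add: ind_zero)
  next
    case (insert a T)
    have a: "a \<in> basis_set A B" and T: "T \<subseteq> basis_set A B" using insert by auto
    have IH: "(\<lambda>y. ind (\<Sum>X\<in>T. X) y) \<in> Lin (summand_index A B) (gen q)" using insert T by blast
    have "(\<lambda>y. (ind a y + ind (\<Sum>X\<in>T. X) y) - 2 * ind a y * ind (\<Sum>X\<in>T. X) y)
           \<in> Lin (summand_index A B) (gen q)"
      by (intro Lin_diff Lin_add ind_in_M[OF a] IH mult_M[OF a])
    then show ?case using insert by (simp add: ind_add)
  qed
qed

lemma cbar_in_M: "cbar q C \<in> Lin (summand_index A B) (gen q)"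
proof -
  obtain T where T: "T \<subseteq> basis_set A B" "C = (\<Sum>X\<in>T. X)" using spanning by blast
  have "(\<lambda>y. sg q C * ind C y) \<in> Lin (summand_index A B) (gen q)"
    using indsum_M[OF T(1)] T(2) by (intro Lin_scale) simp
  then show ?thesis by (simp add: cbar_eq[abs_def])
qed


lemma ind_in_CS: "(\<lambda>y. ind (X::'g hom1) y) \<in> Lin UNIV (cbar q)"
proof -
  have "(\<lambda>y. sg q X * cbar q X y) \<in> Lin UNIV (cbar q)"
    by (rule Lin_scale, rule Lin_base[OF finite_H]) simp
  then show ?thesis by (simp add: cbar_eq mult.assoc[symmetric] sg_sq)
qed

lemma id2: "2 * ind X y * ind Y y = ind X y + ind Y y - ind (X+Y) y"
  unfolding ind_def ipair_add1 by (cases "ipair X y"; cases "ipair Y y") simp_all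

lemma id3: "4 * ind X y * ind Y y * ind Z y =
   ind (X+Y+Z) y + ind X y + ind Y y + ind Z y - ind (X+Y) y - ind (X+Z) y - ind (Y+Z) y"
  unfolding ind_def ipair_add1
  by (cases "ipair X y"; cases "ipair Y y"; cases "ipair Z y") simp_all

lemma gen_in_CS:
  assumes S: "S \<in> summand_index A B"
  shows "gen q S \<in> Lin UNIV (cbar q)"
proof -
  let ?C = "Lin UNIV (cbar q)"
  have c: "card S = 1 \<or> card S = 2 \<or> card S = 3" using S unfolding summand_index_def by auto
  moreover
  { assume "card S = 1"
    then obtain X where "S = {X}" using card_1_singletonE by blast
    then have "gen q S = cbar q X" by (simp add: gen_def fun_eq_iff)
    then have ?thesis using Lin_base[OF finite_H, of X "cbar q"] by simp }
  moreover
  { assume "card S = 2"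
    then obtain X Y where XY: "S = {X,Y}" "X \<noteq> Y" by (auto simp: card_2_iff)
    have "gen q S = (\<lambda>y. (sg q X * sg q Y) * (ind X y + ind Y y - ind (X+Y) y))"
      using XY by (simp add: fun_eq_iff gen_eq sig_def mon_def id2[symmetric] algebra_simps)
    moreover have "(\<lambda>y. (sg q X * sg q Y) * (ind X y + ind Y y - ind (X+Y) y)) \<in> ?C"
      by (intro Lin_scale Lin_diff Lin_add ind_in_CS)
    ultimately have ?thesis by simp }
  moreover
  { assume "card S = 3"
    then obtain X Y Z where XY: "S = {X,Y,Z}" "X \<noteq> Y" "Y \<noteq> Z" "X \<noteq> Z" by (auto simp: card_3_iff)
    have "gen q S = (\<lambda>y. (sg q X * sg q Y * sg q Z) * (ind (X+Y+Z) y + ind X y + ind Y y + ind Z y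
             - ind (X+Y) y - ind (X+Z) y - ind (Y+Z) y))"
    proof (rule ext)
      fix y
      have "gen q S y = (sg q X * sg q Y * sg q Z) * (4 * ind X y * ind Y y * ind Z y)"
        using XY by (simp add: gen_eq sig_def mon_def algebra_simps)
      then show "gen q S y = (sg q X * sg q Y * sg q Z) * (ind (X+Y+Z) y + ind X y + ind Y y + ind Z y
             - ind (X+Y) y - ind (X+Z) y - ind (Y+Z) y)" by (simp only: id3)
    qed
    moreover have "(\<lambda>y. (sg q X * sg q Y * sg q Z) * (ind (X+Y+Z) y + ind X y + ind Y y + ind Z y
             - ind (X+Y) y - ind (X+Z) y - ind (Y+Z) y)) \<in> ?C"
      by (intro Lin_scale Lin_diff Lin_add ind_in_CS)
    ultimately have ?thesis by simp }
  ultimately show ?thesis by blast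
qed

lemma prod_01: "finite U \<Longrightarrow> (\<Prod>X\<in>U. if P X then 1 else (0::8)) = (if \<forall>X\<in>U. P X then 1 else 0)"
  by (induct U rule: finite_induct) auto

lemma mon_pt:
  assumes U: "U \<in> summand_index A B" and S: "S \<in> summand_index A B"
  shows "mon U (pt S) = (if U \<subseteq> S then 1 else 0)"
proof -
  have UE: "U \<subseteq> basis_set A B" and SE: "S \<subseteq> basis_set A B"
    using U S unfolding summand_index_def by auto
  have "mon U (pt S) = (\<Prod>X\<in>U. if X \<in> S then 1 else 0)"
    unfolding mon_def using UE SE by (intro prod.cong) (auto simp: ind_pt)
  also have "\<dots> = (if U \<subseteq> S then 1 else 0)"
    using prod_01[OF I_finite_mem[OF U], of "\<lambda>X. X \<in> S"] by auto
  finally show ?thesis .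
qed

lemma indep:
  assumes eq: "(\<lambda>y. \<Sum>S\<in>summand_index A B. c S * gen q S y)
             = (\<lambda>y. \<Sum>S\<in>summand_index A B. c' S * gen q S y)"
  shows "\<forall>S\<in>summand_index A B. (\<lambda>y. c S * gen q S y) = (\<lambda>y. c' S * gen q S y)"
proof -
  let ?I = "summand_index A B"
  define d where "d S = (c S - c' S) * (2 ^ (card S - 1) * sig q S)" for S
  have dm: "c S * gen q S y - c' S * gen q S y = d S * mon S y" for S y
    by (simp add: d_def gen_eq algebra_simps)
  have Z: "(\<Sum>S\<in>?I. d S * mon S y) = 0" for y
  proof -
    have "(\<Sum>S\<in>?I. c S * gen q S y) - (\<Sum>S\<in>?I. c' S * gen q S y) = 0"
      using fun_cong[OF eq, of y] by simp
    then show ?thesis by (simp add: sum_subtractf[symmetric] dm)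
  qed
  have dz: "\<forall>S\<in>?I. card S = n \<longrightarrow> d S = 0" for n
  proof (induct n rule: less_induct)
    case (less n)
    show ?case
    proof (intro ballI impI)
      fix S assume S: "S \<in> ?I" and cn: "card S = n"
      have fS: "finite S" using S by (rule I_finite_mem)
      have "0 = (\<Sum>U\<in>?I. d U * mon U (pt S))" using Z by simp
      also have "\<dots> = (\<Sum>U\<in>?I. if U \<subseteq> S then d U else 0)"
        using S by (intro sum.cong) (auto simp: mon_pt)
      also have "\<dots> = d S + (\<Sum>U\<in>?I - {S}. if U \<subseteq> S then d U else 0)"
        using S finite_I by (simp add: sum.remove)
      also have "(\<Sum>U\<in>?I - {S}. if U \<subseteq> S then d U else 0) = 0"
      proof (rule sum.neutral, rule ballI)
        fix U assume U: "U \<in> ?I - {S}"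
        show "(if U \<subseteq> S then d U else 0) = 0"
        proof (cases "U \<subseteq> S")
          case True
          then have "U \<subset> S" using U by auto
          then have "card U < n" using fS cn psubset_card_mono by blast
          then show ?thesis using less U by auto
        qed simp
      qed
      finally show "d S = 0" by simp
    qed
  qed
  show ?thesis
  proof
    fix S assume S: "S \<in> ?I"
    have "d S = 0" using dz S by blast
    then have "c S * gen q S y - c' S * gen q S y = 0" for y by (simp add: dm)
    then show "(\<lambda>y. c S * gen q S y) = (\<lambda>y. c' S * gen q S y)" by (simp add: fun_eq_iff)
  qed
qed


lemma card_line:
  assumes S: "S \<in> summand_index A B"
  shows "card {(\<lambda>y. a * gen q S y) | a :: 8. True} = 2 ^ (4 - card S)"
proof -
  define m where "m = (2::8) ^ (card S - 1)"
  define F where "F v = (\<lambda>y. v * sig q S * mon S y)" for v :: 8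
  have set_eq: "{(\<lambda>y. a * gen q S y) | a :: 8. True} = F ` ((\<lambda>a. a * m) ` UNIV)"
  proof -
    have fa: "(\<lambda>y. a * gen q S y) = F (a * m)" for a
      by (simp add: F_def m_def gen_eq fun_eq_iff algebra_simps)
    have "{(\<lambda>y. a * gen q S y) | a :: 8. True} = range (\<lambda>a. (\<lambda>y. a * gen q S y))"
      by blast
    also have "\<dots> = range (\<lambda>a. F (a * m))" by (simp only: fa)
    also have "\<dots> = F ` ((\<lambda>a. a * m) ` UNIV)" by (simp only: image_image)
    finally show ?thesis .
  qed
  have "inj F"
  proof (rule injI)
    fix v v' assume "F v = F v'"
    then have "v * sig q S * mon S (pt S) = v' * sig q S * mon S (pt S)"
      unfolding F_def by (metis)
    then have "v * sig q S * sig q S = v' * sig q S * sig q S" using mon_pt[OF S S] by simp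
    then show "v = v'" by (simp add: mult.assoc sig_sq)
  qed
  then have cr: "card {(\<lambda>y. a * gen q S y) | a :: 8. True} = card ((\<lambda>a. a * m) ` UNIV)"
    unfolding set_eq by (simp add: card_image inj_on_subset[OF \<open>inj F\<close>])
  have c1: "card ((\<lambda>a::8. a * 1) ` UNIV) = 8" by simp
  have c2: "card ((\<lambda>a::8. a * 2) ` UNIV) = 4" unfolding r2 by simp
  have c3: "card ((\<lambda>a::8. a * 4) ` UNIV) = 2" unfolding r4 by simp
  consider "card S = 1" | "card S = 2" | "card S = 3" using S unfolding summand_index_def by force
  then show ?thesis
  proof cases
    case 1
    have "m = 1" unfolding m_def 1 by simp
    then show ?thesis using cr c1 1 by simp
  next
    case 2
    have "m = 2" unfolding m_def 2 by simp
    then show ?thesis using cr c2 2 by simp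
  next
    case 3
    have "m = 4" unfolding m_def 3 by simp
    then show ?thesis using cr c3 3 by simp
  qed
qed

end

theorem mainTheorem11:
  fixes q :: "'g::finite hom1 \<Rightarrow> bit" and A B :: "'g \<Rightarrow> 'g hom1"
  assumes "CARD('g) \<ge> 2"
    and "quad_form q"
    and "symplectic_basis A B"
  shows "cbar_span q =
           {f. \<exists>c :: 'g hom1 set \<Rightarrow> 8. f = (\<lambda>y. \<Sum>S\<in>summand_index A B. c S * gen q S y)}
       \<and> (\<forall>c c' :: 'g hom1 set \<Rightarrow> 8.
            (\<lambda>y. \<Sum>S\<in>summand_index A B. c S * gen q S y)
              = (\<lambda>y. \<Sum>S\<in>summand_index A B. c' S * gen q S y)
            \<longrightarrow> (\<forall>S\<in>summand_index A B. (\<lambda>y. c S * gen q S y) = (\<lambda>y. c' S * gen q S y)))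
       \<and> (\<forall>S\<in>summand_index A B.
            card {(\<lambda>y. a * gen q S y) | a :: 8. True} = 2 ^ (4 - card S))
       \<and> card (basis_set A B) = 2 * CARD('g)"
proof -
  note sb = assms(3)
  have e1: "cbar_span q = Lin UNIV (cbar q)"
    unfolding cbar_span_def Lin_def ..
  have e2: "{f. \<exists>c :: 'g hom1 set \<Rightarrow> 8. f = (\<lambda>y. \<Sum>S\<in>summand_index A B. c S * gen q S y)}
            = Lin (summand_index A B) (gen q)"
    unfolding Lin_def ..
  have "Lin UNIV (cbar q) \<subseteq> Lin (summand_index A B) (gen q)"
    using finite_H cbar_in_M[OF sb] by (intro Lin_subset) auto
  moreover have "Lin (summand_index A B) (gen q) \<subseteq> Lin UNIV (cbar q)"
    using finite_I[OF sb] gen_in_CS[OF sb] by (intro Lin_subset) auto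
  ultimately have p1: "cbar_span q =
           {f. \<exists>c :: 'g hom1 set \<Rightarrow> 8. f = (\<lambda>y. \<Sum>S\<in>summand_index A B. c S * gen q S y)}"
    unfolding e1 e2 by blast
  show ?thesis
    using p1 indep[OF sb] card_line[OF sb] card_E[OF sb] by blast
qed

end
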